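(* Let $n\ge 3$ and let $B$ be a set of points in $PG(n,q)$ whose span $\langle B\rangle$ has dimension at least $3$. Suppose that every point $R\notin B$ lying on at least one secant line to $B$ lies on no tangent line to $B$. Then $|B|\geq 3q$.
   Context: A secant line to $B$ is a line meeting $B$ in at least two points. A tangent line to $B$ is a line meeting $B$ in exactly one point. *)

theory Defs
  imports "HOL-Analysis.Analysis"
begin

text \<open>Projective space PG(n,q) modelled as the lattice of subspaces of the vector
space 'k^'m over a finite field 'k (q = CARD('k)), with CARD('m) = n+1.
Points are 1-dimensional subspaces, lines are 2-dimensional subspaces,
incidence is inclusion.\<close>

definition pg_points :: "('k::field ^ 'm) set set" where
  "pg_points = {P. vec.subspace P \<and> vec.dim P = 1}"

definition pg_lines :: "('k::field ^ 'm) set set" where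
  "pg_lines = {L. vec.subspace L \<and> vec.dim L = 2}"

definition proj_span_dim :: "('k::field ^ 'm) set set \<Rightarrow> int" where
  "proj_span_dim S = int (vec.dim (vec.span (\<Union> S))) - 1"

definition secant_line :: "('k::field ^ 'm) set set \<Rightarrow> ('k ^ 'm) set \<Rightarrow> bool" where
  "secant_line B L \<longleftrightarrow> L \<in> pg_lines \<and> card {P \<in> B. P \<subseteq> L} \<ge> 2"

definition tangent_line :: "('k::field ^ 'm) set set \<Rightarrow> ('k ^ 'm) set \<Rightarrow> bool" where
  "tangent_line B L \<longleftrightarrow> L \<in> pg_lines \<and> card {P \<in> B. P \<subseteq> L} = 1"

end

theory Submission imports Defs begin

lemma pt_point: "(v::'k::field^'m) \<noteq> 0 \<Longrightarrow> vec.span {v} \<in> pg_points"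
  unfolding pg_points_def by simp

lemma pt_sub: "vec.subspace S \<Longrightarrow> vec.span {v} \<subseteq> S \<longleftrightarrow> v \<in> S"
  by (meson insert_subset vec.span_base vec.span_minimal vec.span_superset empty_subsetI subset_trans)

lemma point_ex: assumes "P \<in> pg_points" shows "\<exists>v::'k::field^'m. v \<noteq> 0 \<and> P = vec.span {v}"
proof -
  have s: "vec.subspace P" "vec.dim P = 1" using assms by (auto simp: pg_points_def)
  obtain C where C: "C \<subseteq> P" "vec.independent C" "P \<subseteq> vec.span C" "card C = vec.dim P"
    using vec.basis_exists[of P] by metis
  then obtain v where "C = {v}" using s by (metis card_1_singletonE)
  moreover have "v \<noteq> 0" using C(2) \<open>C = {v}\<close> vec.dependent_zero by blast
  moreover have "P = vec.span {v}"
    using C \<open>C = {v}\<close> s(1) vec.span_subspace by metis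
  ultimately show ?thesis by blast
qed

lemma ind_sym: assumes "(u::'k::field^'m) \<noteq> 0" "v \<notin> vec.span {u}"
  shows "v \<noteq> 0" "u \<notin> vec.span {v}"
proof -
  show "v \<noteq> 0" using assms vec.span_zero by metis
  show "u \<notin> vec.span {v}"
  proof
    assume "u \<in> vec.span {v}"
    then obtain k where k: "u = k *s v" by (auto simp: vec.span_singleton)
    then have "k \<noteq> 0" using assms(1) by auto
    then have "v = inverse k *s u" using k by simp
    then show False using assms(2) vec.span_singleton by auto
  qed
qed

lemma line_pt: assumes "(u::'k::field^'m) \<noteq> 0" "v \<notin> vec.span {u}"
  shows "vec.span {u, v} \<in> pg_lines"
proof -
  have "vec.independent {v, u}"
    using assms by (auto simp: vec.independent_insert)
  moreover have "v \<noteq> u" using assms vec.span_base by blast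
  ultimately show ?thesis unfolding pg_lines_def
    by (simp add: vec.dim_eq_card_independent insert_commute)
qed

lemma line_unique: assumes "L \<in> pg_lines" "(u::'k::field^'m) \<in> L" "v \<in> L" "u \<noteq> 0" "v \<notin> vec.span {u}"
  shows "L = vec.span {u, v}"
proof -
  have s: "vec.subspace L" "vec.dim L = 2" using assms(1) by (auto simp: pg_lines_def)
  have l: "vec.span {u,v} \<in> pg_lines" using line_pt assms by blast
  show ?thesis
    using vec.subspace_dim_equal[of "vec.span {u,v}" L] s l assms(2,3)
    by (auto simp: pg_lines_def vec.span_minimal)
qed

lemma pt_eq: assumes "(u::'k::field^'m) \<noteq> 0" "v \<in> vec.span {u}" "v \<noteq> 0"
  shows "vec.span {v} = vec.span {u}"
proof -
  obtain k where k: "v = k *s u" using assms(2) by (auto simp: vec.span_singleton)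
  have "k \<noteq> 0" using k assms(3) by auto
  then have u: "u = inverse k *s v" using k by simp
  have "u \<in> vec.span {v}" unfolding u by (intro vec.span_scale vec.span_base) simp
  then show ?thesis unfolding vec.span_eq using assms(2) by simp
qed

lemma span2: "z \<in> vec.span {u, v} \<longleftrightarrow> (\<exists>a b. z = a *s u + b *s (v::'k::field^'m))"
proof
  assume "z \<in> vec.span {u, v}"
  then obtain a where "z - a *s u \<in> vec.span {v}" using vec.span_breakdown_eq by blast
  then obtain b where "z - a *s u = b *s v" by (auto simp: vec.span_singleton)
  then show "\<exists>a b. z = a *s u + b *s v" by (metis diff_add_cancel add.commute)
next
  assume "\<exists>a b. z = a *s u + b *s (v::'k::field^'m)"
  then obtain a b where "z = a *s u + b *s v" by blast
  then show "z \<in> vec.span {u, v}"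
    by (simp add: vec.span_add vec.span_scale vec.span_base)
qed

lemma span3: "z \<in> vec.span {u, v, w} \<longleftrightarrow> (\<exists>a b c. z = a *s u + b *s v + c *s (w::'k::field^'m))"
proof
  assume "z \<in> vec.span {u, v, w}"
  then obtain a where "z - a *s u \<in> vec.span {v, w}" using vec.span_breakdown_eq by blast
  then obtain b c where "z - a *s u = b *s v + c *s w" by (auto simp: span2)
  then show "\<exists>a b c. z = a *s u + b *s v + c *s w"
    by (rule_tac x=a in exI, rule_tac x=b in exI, rule_tac x=c in exI) (simp add: vec_eq_iff algebra_simps)
next
  assume "\<exists>a b c. z = a *s u + b *s v + c *s (w::'k::field^'m)"
  then obtain a b c where "z = a *s u + b *s v + c *s w" by blast
  then show "z \<in> vec.span {u, v, w}"
    by (simp add: vec.span_add vec.span_scale vec.span_base)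
qed

lemma indep3: assumes "(x::'k::field^'m) \<noteq> 0" "x2 \<notin> vec.span {x}" "y \<notin> vec.span {x, x2}"
  "a *s x + b *s x2 + c *s y = 0" shows "a = 0 \<and> b = 0 \<and> c = 0"
proof -
  have e: "a * x$i + b * x2$i + c * y$i = 0" for i
    using arg_cong[OF assms(4), of "\<lambda>v. v$i"] by simp
  have c: "c = 0"
  proof (rule ccontr)
    assume cn: "c \<noteq> 0"
    have "y = (- a / c) *s x + (- b / c) *s x2"
    unfolding vec_eq_iff
    proof
      fix i
      have "c * y$i = - a * x$i - b * x2$i" using e[of i] by (simp add: algebra_simps eq_neg_iff_add_eq_0)
      then show "y$i = ((- a / c) *s x + (- b / c) *s x2)$i" using cn by (simp add: field_simps)
    qed
    then show False using assms(3) span2 by blast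
  qed
  have b: "b = 0"
  proof (rule ccontr)
    assume bn: "b \<noteq> 0"
    have "x2 = (- a / b) *s x"
    unfolding vec_eq_iff
    proof
      fix i
      have "b * x2$i = - a * x$i" using e[of i] c by (simp add: algebra_simps eq_neg_iff_add_eq_0)
      then show "x2$i = ((- a / b) *s x)$i" using bn by (simp add: field_simps)
    qed
    then show False using assms(2) by (metis vec.span_scale vec.span_base singletonI)
  qed
  have "a = 0" using assms(1,4) b c by simp
  then show ?thesis using b c by simp
qed

lemma key_hyp:
  fixes B :: "('k::{field,finite} ^ 'm) set set"
  assumes H: "\<forall>R \<in> pg_points - B.
           (\<exists>L. secant_line B L \<and> R \<subseteq> L) \<longrightarrow> \<not> (\<exists>L. tangent_line B L \<and> R \<subseteq> L)"
  and R: "R \<in> pg_points" "R \<notin> B" and L1: "L1 \<in> pg_lines" "R \<subseteq> L1"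
  and P12: "P1 \<in> B" "P2 \<in> B" "P1 \<noteq> P2" "P1 \<subseteq> L1" "P2 \<subseteq> L1"
  and L2: "L2 \<in> pg_lines" "R \<subseteq> L2" and P: "P \<in> B" "P \<subseteq> L2"
  shows "\<exists>Q\<in>B. Q \<subseteq> L2 \<and> Q \<noteq> P"
proof (rule ccontr)
  assume nq: "\<not> ?thesis"
  have fin: "finite {Q \<in> B. Q \<subseteq> L1}" by simp
  have "{P1, P2} \<subseteq> {Q \<in> B. Q \<subseteq> L1}" using P12 by auto
  then have "card {P1, P2} \<le> card {Q \<in> B. Q \<subseteq> L1}" using fin by (rule card_mono[rotated])
  then have s: "secant_line B L1" using L1 P12 by (simp add: secant_line_def)
  have nq': "\<And>Q. Q \<in> B \<Longrightarrow> Q \<subseteq> L2 \<Longrightarrow> Q = P" using nq by blast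
  have "{Q \<in> B. Q \<subseteq> L2} = {P}"
  proof (rule set_eqI)
    fix Q show "Q \<in> {Q \<in> B. Q \<subseteq> L2} \<longleftrightarrow> Q \<in> {P}" using nq' P by blast
  qed
  then have t: "tangent_line B L2" using L2 by (simp add: tangent_line_def)
  have "R \<in> pg_points - B" using R by simp
  with H have "(\<exists>L. secant_line B L \<and> R \<subseteq> L) \<longrightarrow> \<not> (\<exists>L. tangent_line B L \<and> R \<subseteq> L)" by (rule bspec)
  then show False using s t L1(2) L2(2) by blast
qed

theorem mainTheorem15:
  fixes B :: "('k::{field,finite} ^ 'm) set set" and n :: nat
  assumes "CARD('m) = n + 1"
    and "n \<ge> 3"
    and "B \<subseteq> pg_points"
    and "proj_span_dim B \<ge> 3"
    and "\<forall>R \<in> pg_points - B.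
           (\<exists>L. secant_line B L \<and> R \<subseteq> L) \<longrightarrow> \<not> (\<exists>L. tangent_line B L \<and> R \<subseteq> L)"
  shows "card B \<ge> 3 * CARD('k)"
proof -
  note H = assms(5)
  have Bp: "\<And>P. P \<in> B \<Longrightarrow> P \<in> pg_points" using assms(3) by blast
  have nd: "\<exists>P\<in>B. \<not> P \<subseteq> vec.span F" if "finite F" "card F \<le> 3" for F
  proof (rule ccontr)
    assume "\<not> ?thesis"
    then have "\<Union>B \<subseteq> vec.span F" by blast
    then have "vec.span (\<Union>B) \<subseteq> vec.span F" by (simp add: vec.span_minimal)
    then have "vec.dim (vec.span (\<Union>B)) \<le> card F" using vec.dim_le_card that(1) by blast
    then show False using that(2) assms(4) unfolding proj_span_dim_def by linarith
  qed
  obtain X1 where X1: "X1 \<in> B" using nd[of "{}"] by auto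
  obtain x where x: "x \<noteq> 0" "X1 = vec.span {x}" using point_ex[OF Bp[OF X1(1)]] by blast
  obtain X2 where X2: "X2 \<in> B" "\<not> X2 \<subseteq> vec.span {x}" using nd[of "{x}"] by auto
  obtain x2 where x2: "x2 \<noteq> 0" "X2 = vec.span {x2}" using point_ex[OF Bp[OF X2(1)]] by blast
  have x2n: "x2 \<notin> vec.span {x}" using X2 x2 pt_sub by blast
  have c2: "card {x, x2} \<le> 3" by (auto simp: card_insert_if)
  obtain Y where Y: "Y \<in> B" "\<not> Y \<subseteq> vec.span {x, x2}" using nd[of "{x, x2}"] c2 by auto
  obtain y where y: "y \<noteq> 0" "Y = vec.span {y}" using point_ex[OF Bp[OF Y(1)]] by blast
  have yn: "y \<notin> vec.span {x, x2}" using Y y pt_sub by blast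
  define pi where "pi = vec.span {x, x2, y}"
  have c3: "card {x, x2, y} \<le> 3" by (auto simp: card_insert_if)
  obtain Y' where Y': "Y' \<in> B" "\<not> Y' \<subseteq> pi" using nd[of "{x, x2, y}"] c3 unfolding pi_def
    by auto
  obtain y' where y': "y' \<noteq> 0" "Y' = vec.span {y'}" using point_ex[OF Bp[OF Y'(1)]] by blast
  have y'n: "y' \<notin> pi" using Y' y' pt_sub unfolding pi_def by blast
  note I3 = indep3[OF x(1) x2n yn]
  define Pi where "Pi = {P \<in> pg_points. P \<subseteq> pi}"
  have secR: "\<exists>L P1 P2. L \<in> pg_lines \<and> R \<subseteq> L \<and> P1 \<in> B \<and> P2 \<in> B \<and> P1 \<noteq> P2 \<and> P1 \<subseteq> L \<and> P2 \<subseteq> L"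
    if R: "R \<in> Pi" "R \<notin> B" for R
  proof -
    have Rpt: "R \<in> pg_points" using R unfolding Pi_def by blast
    obtain r where r: "r \<noteq> 0" "R = vec.span {r}" using point_ex[OF Rpt] by blast
    have "r \<in> pi" using R r pt_sub unfolding Pi_def pi_def by blast
    then obtain a b c where abc: "r = a *s x + b *s x2 + c *s y" unfolding pi_def span3 by blast
    define w where "w = b *s x2 + c *s y"
    have rw: "r = a *s x + w" unfolding w_def abc by (simp add: add.assoc)
    have w0: "w \<noteq> 0"
    proof
      assume "w = 0"
      then have "r \<in> vec.span {x}" using rw by (simp add: vec.span_scale vec.span_base)
      then have "R = X1" using pt_eq[OF x(1) _ r(1)] r x by simp
      then show False using R X1 by simp
    qed
    have wx: "w \<notin> vec.span {x}"
    proof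
      assume "w \<in> vec.span {x}"
      then obtain k where "w = k *s x" by (auto simp: vec.span_singleton)
      then have "(- k) *s x + b *s x2 + c *s y = 0" unfolding w_def by (simp add: vec_eq_iff algebra_simps)
      then have "b = 0 \<and> c = 0" using I3 by blast
      then show False using w0 unfolding w_def by simp
    qed
    define L where "L = vec.span {x, w}"
    have L: "L \<in> pg_lines" unfolding L_def using line_pt x(1) wx by blast
    have RL: "R \<subseteq> L" unfolding L_def r(2) using rw
      by (simp add: pt_sub vec.span_add vec.span_scale vec.span_base)
    have X1L: "X1 \<subseteq> L" unfolding L_def x(2) by (simp add: pt_sub vec.span_base)
    define W where "W = vec.span {w}"
    have WL: "W \<subseteq> L" unfolding L_def W_def by (simp add: pt_sub vec.span_base)
    have WX: "W \<noteq> X1"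
    proof
      assume "W = X1"
      then have "w \<in> vec.span {x}" unfolding W_def x(2) by (metis singletonI vec.span_base)
      then show False using wx by simp
    qed
    have "\<exists>Q\<in>B. Q \<subseteq> L \<and> Q \<noteq> X1"
    proof (cases "W \<in> B")
      case True then show ?thesis using WL WX by blast
    next
      case False
      define N where "N = vec.span {x2, y}"
      have yx2: "y \<notin> vec.span {x2}"
      proof
        assume "y \<in> vec.span {x2}"
        then obtain k where "y = k *s x2" by (auto simp: vec.span_singleton)
        then have "0 *s x + k *s x2 + (-1) *s y = 0" by (simp add: vec_eq_iff)
        then have "(-1::'k) = 0" using I3 by blast
        then show False by simp
      qed
      have N: "N \<in> pg_lines" unfolding N_def using line_pt x2(1) yx2 by blast
      have WN: "W \<subseteq> N" unfolding W_def N_def w_def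
        by (simp add: pt_sub vec.span_add vec.span_scale vec.span_base)
      have X2N: "X2 \<subseteq> N" unfolding N_def x2(2) by (simp add: pt_sub vec.span_base)
      have YN: "Y \<subseteq> N" unfolding N_def y(2) by (simp add: pt_sub vec.span_base)
      have X2Y: "X2 \<noteq> Y"
      proof
        assume "X2 = Y"
        then have "y \<in> vec.span {x2}" unfolding x2(2) y(2) by (metis singletonI vec.span_base)
        then show False using yx2 by simp
      qed
      show ?thesis
        using key_hyp[OF H pt_point[OF w0, folded W_def] False N WN X2(1) Y(1) X2Y X2N YN L WL X1 X1L]
        by blast
    qed
    then show ?thesis using L RL X1L X1 by blast
  qed
  have pisub: "vec.subspace pi" unfolding pi_def by simp
  have Pi_fin: "finite Pi" by simp
  define h where "h = (\<lambda>(a::'k, b::'k). vec.span {x + a *s x2 + b *s y})"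
  have vab0: "x + a *s x2 + b *s y \<noteq> 0" for a b
  proof
    assume "x + a *s x2 + b *s y = 0"
    then have "1 *s x + a *s x2 + b *s y = 0" by simp
    then have "(1::'k) = 0" using I3 by blast
    then show False by simp
  qed
  have hPi: "h ab \<in> Pi - {vec.span {y}}" for ab
  proof -
    obtain a b where ab: "ab = (a, b)" by fastforce
    have "x + a *s x2 + b *s y \<in> pi" unfolding pi_def span3 by (rule exI[of _ 1]) auto
    then have "h ab \<in> Pi" unfolding Pi_def h_def ab using pt_point[OF vab0] pt_sub[OF pisub] by auto
    moreover have "h ab \<noteq> vec.span {y}"
    proof
      assume "h ab = vec.span {y}"
      then have "x + a *s x2 + b *s y \<in> vec.span {y}" unfolding h_def ab
        by (metis case_prod_conv singletonI vec.span_base)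
      then obtain k where "x + a *s x2 + b *s y = k *s y" by (auto simp: vec.span_singleton)
      then have "1 *s x + a *s x2 + (b - k) *s y = 0" by (simp add: vec_eq_iff algebra_simps)
      then have "(1::'k) = 0" using I3 by blast
      then show False by simp
    qed
    ultimately show ?thesis by simp
  qed
  have hinj: "inj h"
  proof (rule injI)
    fix ab ab' assume e: "h ab = h ab'"
    obtain a b where ab: "ab = (a, b)" by fastforce
    obtain a' b' where ab': "ab' = (a', b')" by fastforce
    have "x + a *s x2 + b *s y \<in> vec.span {x + a' *s x2 + b' *s y}" using e unfolding h_def ab ab'
      by (metis case_prod_conv singletonI vec.span_base)
    then obtain k where "x + a *s x2 + b *s y = k *s (x + a' *s x2 + b' *s y)" by (auto simp: vec.span_singleton)
    then have "(1 - k) *s x + (a - k * a') *s x2 + (b - k * b') *s y = 0" by (simp add: vec_eq_iff algebra_simps)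
    then have "1 - k = 0 \<and> a - k * a' = 0 \<and> b - k * b' = 0" using I3 by blast
    then show "ab = ab'" unfolding ab ab' by simp
  qed
  have yPi: "vec.span {y} \<in> Pi" unfolding Pi_def pi_def using pt_point[OF y(1)]
    by (simp add: pt_sub vec.span_base)
  have "card (h ` UNIV) \<le> card (Pi - {vec.span {y}})"
    using hPi by (intro card_mono) auto
  moreover have "card (h ` UNIV) = CARD('k) * CARD('k)"
    using hinj by (simp add: card_image UNIV_Times_UNIV[symmetric] card_cartesian_product del: UNIV_Times_UNIV)
  moreover have "card (Pi - {vec.span {y}}) = card Pi - 1" using yPi by simp
  moreover have "card Pi > 0" using yPi by (subst card_gt_0_iff) auto
  ultimately have cardPi: "card Pi \<ge> CARD('k) * CARD('k) + 1" by linarith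
  \<comment> \<open>The injection from non-B points of the plane to B-points off the plane\<close>
  define g where "g = (\<lambda>R. SOME Q. Q \<in> B \<and> Q \<subseteq> vec.span (R \<union> Y') \<and> Q \<noteq> Y')"
  have repr: "\<exists>r. r \<noteq> 0 \<and> R = vec.span {r} \<and> r \<in> pi \<and> vec.span (R \<union> Y') = vec.span {r, y'}
      \<and> vec.span {r, y'} \<in> pg_lines" if R: "R \<in> Pi" for R
  proof -
    have Rpt: "R \<in> pg_points" using R unfolding Pi_def by blast
    obtain r where r: "r \<noteq> 0" "R = vec.span {r}" using point_ex[OF Rpt] by blast
    have rpi: "r \<in> pi" using R r pt_sub[OF pisub] unfolding Pi_def by blast
    have "vec.span {r} \<subseteq> pi" using rpi pt_sub[OF pisub] by blast
    then have "y' \<notin> vec.span {r}" using y'n by blast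
    then have l: "vec.span {r, y'} \<in> pg_lines" using line_pt r(1) by blast
    have "vec.span (R \<union> Y') = vec.span {r, y'}"
      unfolding r(2) y'(2) vec.span_eq
      by (auto simp: pt_sub vec.span_base intro: vec.span_base vec.span_mono[THEN subsetD, rotated])
    then show ?thesis using r rpi l by blast
  qed
  have gprop: "g R \<in> B \<and> g R \<subseteq> vec.span (R \<union> Y') \<and> g R \<noteq> Y'" if R: "R \<in> Pi - B" for R
  proof -
    obtain r where r: "r \<noteq> 0" "R = vec.span {r}" "r \<in> pi" "vec.span (R \<union> Y') = vec.span {r, y'}"
      "vec.span {r, y'} \<in> pg_lines" using repr[of R] R by blast
    have RPi: "R \<in> Pi" "R \<notin> B" using R by auto
    obtain L P1 P2 where LP: "L \<in> pg_lines" "R \<subseteq> L" "P1 \<in> B" "P2 \<in> B" "P1 \<noteq> P2" "P1 \<subseteq> L" "P2 \<subseteq> L"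
      using secR[OF RPi] by blast
    have Rp: "R \<in> pg_points" "R \<notin> B" using RPi unfolding Pi_def by auto
    have "R \<subseteq> vec.span {r, y'}" "Y' \<subseteq> vec.span {r, y'}" unfolding r(2) y'(2)
      by (auto simp: pt_sub vec.span_base)
    then have "\<exists>Q\<in>B. Q \<subseteq> vec.span {r, y'} \<and> Q \<noteq> Y'"
      using key_hyp[OF H Rp LP(1,2,3,4,5,6,7) r(5) _ Y'(1)] by blast
    then have "\<exists>Q. Q \<in> B \<and> Q \<subseteq> vec.span (R \<union> Y') \<and> Q \<noteq> Y'" using r(4) by auto
    then show ?thesis unfolding g_def by (rule someI_ex)
  qed
  have gvec: "\<exists>r q s t. R = vec.span {r} \<and> r \<in> pi \<and> g R = vec.span {q} \<and> q = s *s r + t *s y' \<and> s \<noteq> 0"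
    if R: "R \<in> Pi - B" for R
  proof -
    obtain r where r: "r \<noteq> 0" "R = vec.span {r}" "r \<in> pi" "vec.span (R \<union> Y') = vec.span {r, y'}"
      using repr[of R] R by blast
    have gpt: "g R \<in> pg_points" using gprop[OF R] Bp by blast
    obtain q where q: "q \<noteq> 0" "g R = vec.span {q}" using point_ex[OF gpt] by blast
    have "q \<in> g R" unfolding q(2) by (rule vec.span_base) simp
    then have "q \<in> vec.span {r, y'}" using gprop[OF R] r(4) by blast
    then obtain s t where st: "q = s *s r + t *s y'" unfolding span2 by blast
    have "s \<noteq> 0"
    proof
      assume "s = 0"
      then have "q \<in> vec.span {y'}" using st by (simp add: vec.span_scale vec.span_base)
      then have "g R = Y'" using pt_eq[OF y'(1) _ q(1)] q(2) y'(2) by simp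
      then show False using gprop[OF R] by simp
    qed
    then show ?thesis using r q st by blast
  qed
  have goff: "g R \<notin> Pi" if R: "R \<in> Pi - B" for R
  proof
    assume gin: "g R \<in> Pi"
    obtain r q s t where v: "R = vec.span {r}" "r \<in> pi" "g R = vec.span {q}" "q = s *s r + t *s y'" "s \<noteq> 0"
      using gvec[OF R] by blast
    have q0: "q \<noteq> 0" using v(3) gin unfolding Pi_def pg_points_def by auto
    have qpi: "q \<in> pi" using gin v(3) pt_sub[OF pisub] unfolding Pi_def by blast
    show False
    proof (cases "t = 0")
      case True
      then have "q \<in> vec.span {r}" using v(4) by (simp add: vec.span_scale vec.span_base)
      moreover have "r \<noteq> 0" using R v(1) unfolding Pi_def pg_points_def by auto
      ultimately have "g R = R" using pt_eq[of r q] q0 v(1,3) by simp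
      then show False using gprop[OF R] R by simp
    next
      case False
      have "y' = inverse t *s (q - s *s r)"
        unfolding vec_eq_iff
      proof
        fix i
        have "q$i = s * r$i + t * y'$i" using v(4) by simp
        then show "y'$i = (inverse t *s (q - s *s r))$i" using False by (simp add: field_simps)
      qed
      moreover have "inverse t *s (q - s *s r) \<in> pi"
        using qpi v(2) pisub by (simp add: vec.subspace_scale vec.subspace_diff)
      ultimately show False using y'n by simp
    qed
  qed
  have ginj: "inj_on g (Pi - B)"
  proof (rule inj_onI)
    fix R1 R2 assume R1: "R1 \<in> Pi - B" and R2: "R2 \<in> Pi - B" and e: "g R1 = g R2"
    obtain r1 q1 s1 t1 where v1: "R1 = vec.span {r1}" "r1 \<in> pi" "g R1 = vec.span {q1}" "q1 = s1 *s r1 + t1 *s y'" "s1 \<noteq> 0"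
      using gvec[OF R1] by blast
    obtain r2 q2 s2 t2 where v2: "R2 = vec.span {r2}" "r2 \<in> pi" "g R2 = vec.span {q2}" "q2 = s2 *s r2 + t2 *s y'" "s2 \<noteq> 0"
      using gvec[OF R2] by blast
    have r10: "r1 \<noteq> 0" using R1 v1(1) unfolding Pi_def pg_points_def by auto
    have r20: "r2 \<noteq> 0" using R2 v2(1) unfolding Pi_def pg_points_def by auto
    have "q1 \<in> vec.span {q1}" by (rule vec.span_base) simp
    then have "q1 \<in> vec.span {q2}" using e v1(3) v2(3) by simp
    then obtain k where k: "q1 = k *s q2" by (auto simp: vec.span_singleton)
    have tt: "t1 = k * t2"
    proof (rule ccontr)
      assume ne: "t1 \<noteq> k * t2"
      have "y' = inverse (k * t2 - t1) *s (s1 *s r1 - (k * s2) *s r2)"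
        unfolding vec_eq_iff
      proof
        fix i
        have "s1 * r1$i + t1 * y'$i = k * (s2 * r2$i + t2 * y'$i)"
          using arg_cong[OF k, of "\<lambda>v. v$i"] v1(4) v2(4) by (simp add: algebra_simps)
        then have eq: "(k * t2 - t1) * y'$i = s1 * r1$i - (k * s2) * r2$i" by algebra
        have dn: "k * t2 - t1 \<noteq> 0" using ne by simp
        have "y'$i = inverse (k * t2 - t1) * ((k * t2 - t1) * y'$i)" using dn by simp
        also have "\<dots> = inverse (k * t2 - t1) * (s1 * r1$i - (k * s2) * r2$i)" using eq by simp
        finally show "y'$i = (inverse (k * t2 - t1) *s (s1 *s r1 - (k * s2) *s r2))$i" by (simp add: algebra_simps)
      qed
      moreover have "inverse (k * t2 - t1) *s (s1 *s r1 - (k * s2) *s r2) \<in> pi"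
        using v1(2) v2(2) pisub by (simp add: vec.subspace_scale vec.subspace_diff)
      ultimately show False using y'n by simp
    qed
    have "r1 = (k * s2 / s1) *s r2"
      unfolding vec_eq_iff
    proof
      fix i
      have "s1 * r1$i + t1 * y'$i = k * (s2 * r2$i + t2 * y'$i)"
        using arg_cong[OF k, of "\<lambda>v. v$i"] v1(4) v2(4) by (simp add: algebra_simps)
      then have eq: "s1 * r1$i = (k * s2) * r2$i" using tt by algebra
      have "r1$i = inverse s1 * (s1 * r1$i)" using v1(5) by simp
      also have "\<dots> = inverse s1 * ((k * s2) * r2$i)" using eq by simp
      finally show "r1$i = ((k * s2 / s1) *s r2)$i" by (simp add: divide_inverse algebra_simps)
    qed
    then have "r1 \<in> vec.span {r2}" by (simp add: vec.span_scale vec.span_base)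
    then show "R1 = R2" using pt_eq[OF r20 _ r10] v1(1) v2(1) by simp
  qed
  have gim: "g ` (Pi - B) \<subseteq> B - Pi - {Y'}" using gprop goff by auto
  have Y'B: "Y' \<in> B - Pi" using Y' unfolding Pi_def by auto
  have "card (Pi - B) \<le> card (B - Pi - {Y'})"
    using card_inj_on_le[OF ginj gim] by simp
  also have "\<dots> = card (B - Pi) - 1" using Y'B by simp
  finally have c0: "card (Pi - B) \<le> card (B - Pi) - 1" .
  have "card (B - Pi) > 0" using Y'B by (subst card_gt_0_iff) auto
  then have c1: "card (Pi - B) + 1 \<le> card (B - Pi)" using c0 by linarith
  have "card B = card (B \<inter> Pi) + card (B - Pi)" by (simp add: card_Int_Diff)
  moreover have "card Pi = card (Pi \<inter> B) + card (Pi - B)" by (simp add: card_Int_Diff)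
  ultimately have "card B \<ge> card Pi + 1" using c1 by (simp add: Int_commute)
  then have cB: "card B \<ge> CARD('k) * CARD('k) + 2" using cardPi by linarith
  have q2: "CARD('k) \<ge> 2"
  proof -
    have "card {0::'k, 1} \<le> CARD('k)" by (rule card_mono) auto
    then show ?thesis by simp
  qed
  have "3 * CARD('k) \<le> CARD('k) * CARD('k) + 2"
  proof -
    obtain m where m: "CARD('k) = m + 2" using q2 by (metis add.commute le_Suc_ex)
    show ?thesis unfolding m by (simp add: algebra_simps)
  qed
  then show ?thesis using cB by linarith
qed

end
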